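(* Let $G$ be a graph and $e=\{u,v\}\notin G$ an edge between vertices of $G$. Let $K=K(G)$ and $K'=K(G\cup\{e\})$ be the clique complexes, and for each $j$ let $i_j:\mathrm{H}_j(K\cap\mathrm{st}_{K'}(e))\to\mathrm{H}_j(K)$ be the map induced by inclusion (reduced homology over a field). Define $F_k^+(e)=\mathrm{rk}(\ker i_{k-1})$ and $F_k^-(e)=\mathrm{rk}(\mathrm{im}\, i_{k-1})$. Then \[ \beta_k(K')=\beta_k(K)+F_k^+(e)-F_{k+1}^-(e)\quad(k>0),\qquad \beta_0(K')=\beta_0(K)-F_1^-(e), \] and \[ F_k^+(e)+F_k^-(e)=\beta_{k-2}(\mathrm{lk}_{K'}(e))\quad(k>1),\qquad F_1^+(e)+F_1^-(e)=\mathbf{1}\{\mathrm{lk}_{K'}(e)=\emptyset\}. \]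
   Context: The clique complex $K(G)$ of a graph $G$ is the maximal simplicial complex whose 1-skeleton is $G$. For a simplex $\sigma$ of a complex $K$, the closed star $\mathrm{st}_K(\sigma)$ is the smallest subcomplex containing all simplices $\tau\supseteq\sigma$, and the link is $\mathrm{lk}_K(\sigma)=\{\tau\in\mathrm{st}_K(\sigma):\sigma\cap\tau=\emptyset\}$. $\beta_k$ denotes the reduced Betti number (rank of reduced homology over the field). *)

theory Defs
  imports Complex_Main "HOL-Library.Function_Algebras"
begin

text \<open>Simplicial complexes are represented as sets of finite
  vertex sets closed under subsets; the empty simplex is included (it serves as the
  (-1)-dimensional face, which yields reduced homology).\<close>

definition clique_complex :: "'a set \<Rightarrow> 'a set set \<Rightarrow> 'a set set" where
  "clique_complex V E =
     {\<sigma>. \<sigma> \<subseteq> V \<and> finite \<sigma> \<and> (\<forall>x\<in>\<sigma>. \<forall>y\<in>\<sigma>. x \<noteq> y \<longrightarrow> {x, y} \<in> E)}"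

definition closed_star :: "'a set set \<Rightarrow> 'a set \<Rightarrow> 'a set set" where
  "closed_star K \<sigma> = {\<tau>. \<exists>\<rho>\<in>K. \<sigma> \<subseteq> \<rho> \<and> \<tau> \<subseteq> \<rho>}"

definition link :: "'a set set \<Rightarrow> 'a set \<Rightarrow> 'a set set" where
  "link K \<sigma> = {\<tau> \<in> closed_star K \<sigma>. \<sigma> \<inter> \<tau> = {}}"

definition fscale :: "'f::field \<Rightarrow> ('b \<Rightarrow> 'f) \<Rightarrow> ('b \<Rightarrow> 'f)" where
  "fscale a c = (\<lambda>x. a * c x)"

definition fdim :: "('b \<Rightarrow> 'f::field) set \<Rightarrow> nat" where
  "fdim V = vector_space.dim (fscale :: 'f \<Rightarrow> ('b \<Rightarrow> 'f) \<Rightarrow> ('b \<Rightarrow> 'f)) V"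

text \<open>Dimension of the quotient space V/W (for finite-dimensional subspaces W \<subseteq> V).\<close>
definition qdim :: "('b \<Rightarrow> 'f::field) set \<Rightarrow> ('b \<Rightarrow> 'f) set \<Rightarrow> int" where
  "qdim V W = int (fdim V) - int (fdim W)"

text \<open>k-chains of L (k :: int, k \<ge> -1; the (-1)-chains are multiples of the empty
  simplex): coefficient functions supported on simplices of L with k+1 vertices.
  Simplices are oriented by the linear order of the vertices.\<close>
definition chains :: "'f::field itself \<Rightarrow> int \<Rightarrow> 'a set set \<Rightarrow> ('a set \<Rightarrow> 'f) set" where
  "chains F k L = {c. \<forall>\<sigma>. c \<sigma> \<noteq> 0 \<longrightarrow> \<sigma> \<in> L \<and> finite \<sigma> \<and> int (card \<sigma>) = k + 1}"

definition bd :: "('a::linorder set \<Rightarrow> 'f::field) \<Rightarrow> 'a set \<Rightarrow> 'f" where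
  "bd c \<tau> = (\<Sum>v\<in>{v. v \<notin> \<tau> \<and> c (insert v \<tau>) \<noteq> 0}.
               (-1) ^ card {w\<in>\<tau>. w < v} * c (insert v \<tau>))"

definition cycles :: "'f::field itself \<Rightarrow> int \<Rightarrow> 'a::linorder set set \<Rightarrow> ('a set \<Rightarrow> 'f) set" where
  "cycles F k L = {c \<in> chains F k L. bd c = (\<lambda>_. 0)}"

definition boundaries :: "'f::field itself \<Rightarrow> int \<Rightarrow> 'a::linorder set set \<Rightarrow> ('a set \<Rightarrow> 'f) set" where
  "boundaries F k L = bd ` chains F (k + 1) L"

definition betti :: "'f::field itself \<Rightarrow> int \<Rightarrow> 'a::linorder set set \<Rightarrow> int" where
  "betti F k L = qdim (cycles F k L) (boundaries F k L)"

text \<open>For a subcomplex L \<subseteq> K, the inclusion-induced map i_j : H_j(L) \<rightarrow> H_j(K),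
  [z] \<mapsto> [z]. Its kernel is (Z_j(L) \<inter> B_j(K)) / B_j(L) and its image is
  (Z_j(L) + B_j(K)) / B_j(K).\<close>
definition incl_ker_rank :: "'f::field itself \<Rightarrow> int \<Rightarrow> 'a::linorder set set \<Rightarrow> 'a set set \<Rightarrow> int" where
  "incl_ker_rank F j L K = qdim (cycles F j L \<inter> boundaries F j K) (boundaries F j L)"

definition incl_im_rank :: "'f::field itself \<Rightarrow> int \<Rightarrow> 'a::linorder set set \<Rightarrow> 'a set set \<Rightarrow> int" where
  "incl_im_rank F j L K =
     qdim {(\<lambda>x. z x + b x) | z b. z \<in> cycles F j L \<and> b \<in> boundaries F j K} (boundaries F j K)"

definition Fplus :: "'f::field itself \<Rightarrow> 'a::linorder set set \<Rightarrow> 'a set set \<Rightarrow> 'a set \<Rightarrow> int \<Rightarrow> int" where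
  "Fplus F K K' e k = incl_ker_rank F (k - 1) (K \<inter> closed_star K' e) K"

definition Fminus :: "'f::field itself \<Rightarrow> 'a::linorder set set \<Rightarrow> 'a set set \<Rightarrow> 'a set \<Rightarrow> int \<Rightarrow> int" where
  "Fminus F K K' e k = incl_im_rank F (k - 1) (K \<inter> closed_star K' e) K"

end

theory Submission
  imports Defs
begin

interpretation fs: vector_space "fscale :: 'f::field \<Rightarrow> ('b \<Rightarrow> 'f) \<Rightarrow> ('b \<Rightarrow> 'f)"
  by unfold_locales (auto simp: fscale_def algebra_simps)

interpretation fsp: vector_space_pair "fscale :: 'f::field \<Rightarrow> ('b \<Rightarrow> 'f) \<Rightarrow> ('b \<Rightarrow> 'f)"
   "fscale :: 'f::field \<Rightarrow> ('b \<Rightarrow> 'f) \<Rightarrow> ('b \<Rightarrow> 'f)" ..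

definition fd :: "('b \<Rightarrow> 'f::field) set \<Rightarrow> bool" where
  "fd S \<longleftrightarrow> (\<exists>W. finite W \<and> S \<subseteq> fs.span W)"

lemma fd_mono: "fd S \<Longrightarrow> T \<subseteq> S \<Longrightarrow> fd T"
  unfolding fd_def by blast

lemma fd_extend:
  fixes S V :: "('b \<Rightarrow> 'f::field) set"
  assumes "fd V" "S \<subseteq> V" "fs.independent S"
  obtains B where "S \<subseteq> B" "B \<subseteq> V" "fs.independent B" "V \<subseteq> fs.span B" "finite B" "card B = fs.dim V"
proof -
  obtain B where B: "S \<subseteq> B" "B \<subseteq> V" "fs.independent B" "V \<subseteq> fs.span B"
    by (rule fs.maximal_independent_subset_extend[OF assms(2,3)])
  obtain W where W: "finite W" "V \<subseteq> fs.span W" using assms(1) unfolding fd_def by blast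
  have "B \<subseteq> fs.span W" using B(2) W(2) by (rule subset_trans)
  hence fB: "finite B" using fs.independent_span_bound[OF W(1) B(3)] by simp
  have cB: "card B = fs.dim V" by (rule fs.basis_card_eq_dim[OF B(2) B(4) B(3)])
  show ?thesis by (rule that[OF B fB cB])
qed

lemma fd_basis:
  fixes V :: "('b \<Rightarrow> 'f::field) set"
  assumes "fd V"
  obtains B where "B \<subseteq> V" "fs.independent B" "V \<subseteq> fs.span B" "finite B" "card B = fs.dim V"
proof (rule fd_extend[OF assms empty_subsetI fs.independent_empty])
  fix B assume h: "{} \<subseteq> B" "B \<subseteq> V" "fs.independent B" "V \<subseteq> fs.span B" "finite B" "card B = fs.dim V"
  show thesis by (rule that[OF h(2-6)])
qed

lemma rank_nullity:
  fixes U :: "('b \<Rightarrow> 'f::field) set" and f :: "('b \<Rightarrow> 'f) \<Rightarrow> ('b \<Rightarrow> 'f)"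
  assumes U: "fs.subspace U" "fd U" and f: "module_hom fscale fscale f"
  shows "fs.dim U = fs.dim {x\<in>U. f x = 0} + fs.dim (f ` U)"
proof -
  interpret f: module_hom fscale fscale f by (rule f)
  let ?N = "{x\<in>U. f x = 0}"
  have Neq: "?N = U \<inter> {x. f x = 0}" by auto
  have Nsub: "fs.subspace ?N"
    unfolding Neq by (rule fs.subspace_inter[OF U(1) f.subspace_kernel])
  have "fd ?N" by (rule fd_mono[OF U(2)]) auto
  then obtain B0 where B0: "B0 \<subseteq> ?N" "fs.independent B0" "?N \<subseteq> fs.span B0" "finite B0" "card B0 = fs.dim ?N"
    by (rule fd_basis)
  have "B0 \<subseteq> U" using B0(1) by auto
  obtain B where B: "B0 \<subseteq> B" "B \<subseteq> U" "fs.independent B" "U \<subseteq> fs.span B" "finite B" "card B = fs.dim U"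
    by (rule fd_extend[OF U(2) \<open>B0 \<subseteq> U\<close> B0(2)])
  have spB0: "fs.span B0 \<subseteq> ?N" using fs.span_minimal[OF B0(1) Nsub] .
  have "f ` U \<subseteq> fs.span (f ` (B - B0))"
  proof
    fix y assume "y \<in> f ` U"
    then obtain x where x: "x \<in> U" "y = f x" by blast
    have "B0 \<union> (B - B0) = B" using B(1) by blast
    hence "x \<in> fs.span (B0 \<union> (B - B0))" using B(4) x(1) by auto
    then obtain a b where ab: "x = a + b" "a \<in> fs.span B0" "b \<in> fs.span (B - B0)"
      unfolding fs.span_Un by blast
    have "f a = 0" using ab(2) spB0 by blast
    hence yb: "y = f b" using x(2) ab(1) f.add by simp
    have "f b \<in> f ` fs.span (B - B0)" using ab(3) by (rule imageI)
    thus "y \<in> fs.span (f ` (B - B0))" using yb f.span_image by simp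
  qed
  hence le1: "fs.dim (f ` U) \<le> card (f ` (B - B0))"
    by (rule fs.dim_le_card) (use B(5) in auto)
  have "card (f ` (B - B0)) \<le> card (B - B0)" by (rule card_image_le) (use B(5) in auto)
  also have "\<dots> = card B - card B0" by (rule card_Diff_subset[OF B0(4) B(1)])
  finally have A: "fs.dim (f ` U) \<le> card B - card B0" using le1 by linarith
  have "finite (f ` B)" using B(5) by simp
  hence "fd (f ` U)" unfolding fd_def by (intro exI[of _ "f ` B"] conjI f.spans_image[OF B(4)])
  then obtain C where C: "C \<subseteq> f ` U" "fs.independent C" "f ` U \<subseteq> fs.span C" "finite C" "card C = fs.dim (f ` U)"
    by (rule fd_basis)
  have "\<forall>c\<in>C. \<exists>x\<in>U. f x = c" using C(1) by blast
  then obtain g where g: "\<And>c. c \<in> C \<Longrightarrow> g c \<in> U \<and> f (g c) = c" by metis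
  have "U \<subseteq> fs.span (B0 \<union> g ` C)"
  proof
    fix x assume x: "x \<in> U"
    have "f x \<in> fs.span C" using C(3) x by blast
    then obtain a where a: "f x = (\<Sum>c\<in>C. fscale (a c) c)" using fs.span_finite[OF C(4)] by blast
    define y where "y = (\<Sum>c\<in>C. fscale (a c) (g c))"
    have yU: "y \<in> U" unfolding y_def using g by (intro fs.subspace_sum[OF U(1)] fs.subspace_scale[OF U(1)]) auto
    have ysp: "y \<in> fs.span (g ` C)" unfolding y_def
      by (intro fs.span_sum fs.span_scale fs.span_base) auto
    have "f y = (\<Sum>c\<in>C. fscale (a c) (f (g c)))" unfolding y_def by (simp add: f.sum f.scale)
    also have "\<dots> = f x" using a g by simp
    finally have "f (x - y) = 0" by (simp add: f.diff)
    hence "x - y \<in> ?N" using x yU fs.subspace_diff[OF U(1)] by blast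
    hence "x - y \<in> fs.span B0" using B0(3) by blast
    hence "x - y \<in> fs.span (B0 \<union> g ` C)" using fs.span_mono[of B0 "B0 \<union> g ` C"] by blast
    moreover have "y \<in> fs.span (B0 \<union> g ` C)" using ysp fs.span_mono[of "g ` C" "B0 \<union> g ` C"] by blast
    ultimately have "(x - y) + y \<in> fs.span (B0 \<union> g ` C)" by (rule fs.span_add)
    thus "x \<in> fs.span (B0 \<union> g ` C)" by simp
  qed
  hence "fs.dim U \<le> card (B0 \<union> g ` C)" by (rule fs.dim_le_card) (use B0(4) C(4) in auto)
  also have "\<dots> \<le> card B0 + card (g ` C)" by (rule card_Un_le)
  also have "\<dots> \<le> card B0 + card C" using card_image_le[OF C(4), of g] by linarith
  finally have "fs.dim U \<le> card B0 + card C" .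
  moreover have "card B0 \<le> card B" by (rule card_mono[OF B(5) B(1)])
  ultimately show ?thesis using A B(6) B0(5) C(5) by linarith
qed

definition ssum :: "('b \<Rightarrow> 'f::field) set \<Rightarrow> ('b \<Rightarrow> 'f) set \<Rightarrow> ('b \<Rightarrow> 'f) set" where
  "ssum U W = {x + y | x y. x \<in> U \<and> y \<in> W}"

lemma sum_formula:
  fixes U W :: "('b \<Rightarrow> 'f::field) set"
  assumes U: "fs.subspace U" "fd U" and W: "fs.subspace W" "fd W"
  shows "fs.dim (ssum U W) + fs.dim (U \<inter> W) = fs.dim U + fs.dim W"
proof -
  let ?S = "ssum U W"
  have Ssub: "fs.subspace ?S" unfolding ssum_def by (rule fs.subspace_sums[OF U(1) W(1)])
  obtain WU WW where "finite WU" "U \<subseteq> fs.span WU" "finite WW" "W \<subseteq> fs.span WW"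
    using U(2) W(2) unfolding fd_def by blast
  hence "?S \<subseteq> fs.span (WU \<union> WW)"
  proof -
    have "x + y \<in> fs.span (WU \<union> WW)" if "x \<in> U" "y \<in> W" for x y
    proof (rule fs.span_add)
      show "x \<in> fs.span (WU \<union> WW)"
        using that(1) \<open>U \<subseteq> fs.span WU\<close> fs.span_mono[of WU "WU \<union> WW"] by blast
      show "y \<in> fs.span (WU \<union> WW)"
        using that(2) \<open>W \<subseteq> fs.span WW\<close> fs.span_mono[of WW "WU \<union> WW"] by blast
    qed
    thus ?thesis unfolding ssum_def by blast
  qed
  moreover have "finite (WU \<union> WW)" using \<open>finite WU\<close> \<open>finite WW\<close> by simp
  ultimately have Sfd: "fd ?S" unfolding fd_def by blast
  have US: "U \<subseteq> ?S"
  proof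
    fix x assume "x \<in> U" thus "x \<in> ?S" unfolding ssum_def
      using fs.subspace_0[OF W(1)] by (intro CollectI exI[of _ x] exI[of _ 0]) simp
  qed
  have WS: "W \<subseteq> ?S"
  proof
    fix x assume "x \<in> W" thus "x \<in> ?S" unfolding ssum_def
      using fs.subspace_0[OF U(1)] by (intro CollectI exI[of _ 0] exI[of _ x]) simp
  qed
  obtain BW where BW: "BW \<subseteq> W" "fs.independent BW" "W \<subseteq> fs.span BW" "finite BW" "card BW = fs.dim W"
    by (rule fd_basis[OF W(2)])
  have "BW \<subseteq> ?S" using BW(1) WS by (rule subset_trans)
  obtain B where B: "BW \<subseteq> B" "B \<subseteq> ?S" "fs.independent B" "?S \<subseteq> fs.span B" "finite B" "card B = fs.dim ?S"
    by (rule fd_extend[OF Sfd \<open>BW \<subseteq> ?S\<close> BW(2)])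
  define p where "p = fsp.construct B (\<lambda>b. if b \<in> BW then 0 else b)"
  have plin': "Vector_Spaces.linear fscale fscale p"
    unfolding p_def by (rule fsp.linear_construct[OF B(3)])
  have plin: "module_hom fscale fscale p"
    using plin' by (simp add: linear_iff_module_hom)
  interpret p: module_hom fscale fscale p by (rule plin)
  have pB: "\<And>b. b \<in> B \<Longrightarrow> p b = (if b \<in> BW then 0 else b)"
    unfolding p_def by (rule fsp.construct_basis[OF B(3)])
  have spW: "fs.span BW \<subseteq> W" using fs.span_minimal[OF BW(1) W(1)] .
  have ker: "\<And>x. x \<in> ?S \<Longrightarrow> (p x = 0 \<longleftrightarrow> x \<in> W)"
  proof -
    fix x assume xS: "x \<in> ?S"
    have "BW \<union> (B - BW) = B" using B(1) by blast
    hence "x \<in> fs.span (BW \<union> (B - BW))" using B(4) xS by auto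
    then obtain a b where ab: "x = a + b" "a \<in> fs.span BW" "b \<in> fs.span (B - BW)"
      unfolding fs.span_Un by blast
    have pa: "p a = 0" by (rule p.eq_0_on_span[OF _ ab(2)]) (use pB B(1) in auto)
    have "p b = id b"
      by (rule fsp.module_hom_eq_on_span[OF plin' fs.module_hom_id _ ab(3)])
        (use pB in auto)
    hence pb: "p b = b" by simp
    have px: "p x = b" using ab(1) pa pb p.add by simp
    show "p x = 0 \<longleftrightarrow> x \<in> W"
    proof
      assume "p x = 0" hence "x = a" using px ab(1) by simp
      thus "x \<in> W" using ab(2) spW by blast
    next
      assume "x \<in> W" hence "x \<in> fs.span BW" using BW(3) by blast
      thus "p x = 0" by (rule p.eq_0_on_span[rotated]) (use pB B(1) in auto)
    qed
  qed
  have kS: "{x\<in>?S. p x = 0} = W"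
  proof (rule set_eqI)
    fix x show "x \<in> {x\<in>?S. p x = 0} \<longleftrightarrow> x \<in> W" using ker[of x] WS by blast
  qed
  have kU: "{x\<in>U. p x = 0} = U \<inter> W"
  proof (rule set_eqI)
    fix x show "x \<in> {x\<in>U. p x = 0} \<longleftrightarrow> x \<in> U \<inter> W" using ker[of x] US by blast
  qed
  have img: "p ` ?S = p ` U"
  proof
    show "p ` U \<subseteq> p ` ?S" using US by blast
    show "p ` ?S \<subseteq> p ` U"
    proof
      fix z assume "z \<in> p ` ?S"
      then obtain x y where "x \<in> U" "y \<in> W" "z = p (x + y)" unfolding ssum_def by blast
      moreover have "p y = 0" using ker[of y] WS \<open>y \<in> W\<close> by blast
      ultimately have "z = p x" using p.add[of x y] by simp
      thus "z \<in> p ` U" using \<open>x \<in> U\<close> by blast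
    qed
  qed
  have r1: "fs.dim ?S = fs.dim W + fs.dim (p ` U)"
    using rank_nullity[OF Ssub Sfd plin] kS img by simp
  have r2: "fs.dim U = fs.dim (U \<inter> W) + fs.dim (p ` U)"
    using rank_nullity[OF U plin] kU by simp
  show ?thesis using r1 r2 by linarith
qed


lemma sum_fun_apply: "(sum f A) x = (\<Sum>a\<in>A. f a x)"
  by (induction A rule: infinite_finite_induct) auto

definition sg :: "'a::linorder \<Rightarrow> 'a set \<Rightarrow> 'f::field" where
  "sg v \<tau> = (-1) ^ card {w\<in>\<tau>. w < v}"

definition bdV :: "'a::linorder set \<Rightarrow> ('a set \<Rightarrow> 'f::field) \<Rightarrow> ('a set \<Rightarrow> 'f)" where
  "bdV V c \<tau> = (\<Sum>v\<in>V - \<tau>. sg v \<tau> * c (insert v \<tau>))"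

lemma sg_sq: "sg v \<tau> * sg v \<tau> = (1::'f::field)"
proof -
  have "((-1::'f)^n) * (-1)^n = 1" for n by (induction n) auto
  thus ?thesis unfolding sg_def by blast
qed

lemma sg_insert:
  assumes "finite \<tau>" "w \<notin> \<tau>" "w \<noteq> v"
  shows "(sg v (insert w \<tau>) :: 'f::field) = (if w < v then - sg v \<tau> else sg v \<tau>)"
proof (cases "w < v")
  case True
  have "{x\<in>insert w \<tau>. x < v} = insert w {x\<in>\<tau>. x < v}" using True by auto
  moreover have "card (insert w {x\<in>\<tau>. x < v}) = Suc (card {x\<in>\<tau>. x < v})"
    using assms by (intro card_insert_disjoint) auto
  ultimately show ?thesis using True by (simp add: sg_def)
next
  case False
  have "{x\<in>insert w \<tau>. x < v} = {x\<in>\<tau>. x < v}" using False by auto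
  thus ?thesis using False by (simp add: sg_def)
qed

lemma sg_swap:
  assumes "finite \<tau>" "w \<notin> \<tau>" "v \<notin> \<tau>" "w \<noteq> v"
  shows "(sg v (insert w \<tau>) * sg w (insert v \<tau>) :: 'f::field) = - (sg v \<tau> * sg w \<tau>)"
proof -
  have 1: "(sg v (insert w \<tau>) :: 'f) = (if w < v then - sg v \<tau> else sg v \<tau>)"
    by (rule sg_insert) (use assms in auto)
  have 2: "(sg w (insert v \<tau>) :: 'f) = (if v < w then - sg w \<tau> else sg w \<tau>)"
    by (rule sg_insert) (use assms in auto)
  show ?thesis using 1 2 assms(4) by (cases "w < v") (auto simp: not_less_iff_gr_or_eq)
qed

lemma sg_swap2:
  assumes "finite \<tau>" "w \<notin> \<tau>" "v \<notin> \<tau>" "w \<noteq> v"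
  shows "(sg v \<tau> * sg w (insert v \<tau>) :: 'f::field) = - (sg w \<tau> * sg v (insert w \<tau>))"
proof -
  have 1: "(sg v (insert w \<tau>) :: 'f) = (if w < v then - sg v \<tau> else sg v \<tau>)"
    by (rule sg_insert) (use assms in auto)
  have 2: "(sg w (insert v \<tau>) :: 'f) = (if v < w then - sg w \<tau> else sg w \<tau>)"
    by (rule sg_insert) (use assms in auto)
  show ?thesis
  proof (cases "w < v")
    case True
    hence "\<not> v < w" by simp
    thus ?thesis using 1 2 True by (simp add: mult.commute)
  next
    case False
    hence "v < w" using assms(4) by simp
    thus ?thesis using 1 2 False by (simp add: mult.commute)
  qed
qed

lemma bdV_add: "bdV V (c + d) = bdV V c + bdV V d"
  by (rule ext) (simp add: bdV_def sum.distrib ring_distribs)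

lemma bdV_scale: "bdV V (fscale a c) = fscale a (bdV V c)"
  by (rule ext) (simp add: bdV_def fscale_def sum_distrib_left mult.left_commute)

lemma bdV_hom: "module_hom fscale fscale (bdV V :: ('a::linorder set \<Rightarrow> 'f::field) \<Rightarrow> _)"
  unfolding module_hom_iff
  by (auto simp: bdV_add bdV_scale intro: fs.module_axioms)

lemma bdV_zero: "bdV V 0 = 0"
  by (rule ext) (simp add: bdV_def)

lemma bdV_bdV:
  fixes c :: "'a::linorder set \<Rightarrow> 'f::field"
  assumes V: "finite V" and fin: "\<And>\<sigma>. c \<sigma> \<noteq> 0 \<Longrightarrow> finite \<sigma>"
  shows "bdV V (bdV V c) = 0"
proof (rule ext)
  fix \<rho>
  let ?D = "V - \<rho>"
  define f where "f w v = sg w \<rho> * sg v (insert w \<rho>) * c (insert v (insert w \<rho>))" for w v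
  have eq1: "bdV V (bdV V c) \<rho> = (\<Sum>w\<in>?D. \<Sum>v\<in>?D - {w}. f w v)"
    unfolding bdV_def sum_distrib_left
  proof (rule sum.cong[OF refl])
    fix w assume "w \<in> V - \<rho>"
    have "V - insert w \<rho> = ?D - {w}" by auto
    thus "(\<Sum>v\<in>V - insert w \<rho>. sg w \<rho> * (sg v (insert w \<rho>) * c (insert v (insert w \<rho>)))) =
          (\<Sum>v\<in>?D - {w}. f w v)"
      unfolding f_def by (simp only: mult.assoc)
  qed
  show "bdV V (bdV V c) \<rho> = 0 \<rho>"
  proof (cases "finite \<rho>")
    case False
    have "f w v = 0" for w v using fin[of "insert v (insert w \<rho>)"] False unfolding f_def by auto
    thus ?thesis using eq1 by simp
  next
    case True
    define g where "g w v = (if v = w then 0 else f w v)" for w v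
    define h where "h w v = (if w < v then f w v else 0)" for w v
    have anti: "f v w = - f w v" if "w \<in> ?D" "v \<in> ?D" "w \<noteq> v" for w v
    proof -
      have ins: "insert w (insert v \<rho>) = insert v (insert w \<rho>)" by auto
      have sw: "sg v \<rho> * sg w (insert v \<rho>) = - (sg w \<rho> * sg v (insert w \<rho>) :: 'f)"
        by (rule sg_swap2) (use that True in auto)
      have "f v w = (sg v \<rho> * sg w (insert v \<rho>)) * c (insert v (insert w \<rho>))"
        unfolding f_def ins ..
      also have "\<dots> = - (sg w \<rho> * sg v (insert w \<rho>)) * c (insert v (insert w \<rho>))"
        by (simp only: sw)
      also have "\<dots> = - f w v" unfolding f_def by simp
      finally show ?thesis .
    qed
    have gh: "g w v = h w v - h v w" if "w \<in> ?D" "v \<in> ?D" for w v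
    proof -
      consider "v = w" | "w < v" | "v < w" using less_linear by blast
      thus ?thesis
      proof cases
        case 1 thus ?thesis by (simp add: g_def h_def)
      next
        case 2
        hence "\<not> v < w" "v \<noteq> w" by auto
        thus ?thesis using 2 by (simp add: g_def h_def)
      next
        case 3
        hence nv: "\<not> w < v" "v \<noteq> w" by auto
        have "f v w = - f w v" using anti[OF that] 3 by simp
        thus ?thesis using nv 3 by (simp add: g_def h_def)
      qed
    qed
    have inner: "(\<Sum>v\<in>?D - {w}. f w v) = (\<Sum>v\<in>?D. g w v)" if "w \<in> ?D" for w
    proof -
      have "(\<Sum>v\<in>?D. g w v) = g w w + (\<Sum>v\<in>?D - {w}. g w v)"
        using V that by (intro sum.remove) auto
      also have "\<dots> = (\<Sum>v\<in>?D - {w}. f w v)" unfolding g_def by simp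
      finally show ?thesis by simp
    qed
    have "bdV V (bdV V c) \<rho> = (\<Sum>w\<in>?D. \<Sum>v\<in>?D. h w v - h v w)"
      using eq1 inner gh by simp
    also have "\<dots> = (\<Sum>w\<in>?D. \<Sum>v\<in>?D. h w v) - (\<Sum>w\<in>?D. \<Sum>v\<in>?D. h v w)"
      by (simp add: sum_subtractf)
    also have "(\<Sum>w\<in>?D. \<Sum>v\<in>?D. h v w) = (\<Sum>w\<in>?D. \<Sum>v\<in>?D. h w v)"
      by (rule sum.swap)
    finally show ?thesis by simp
  qed
qed

definition hop :: "'a::linorder \<Rightarrow> ('a set \<Rightarrow> 'f::field) \<Rightarrow> ('a set \<Rightarrow> 'f)" where
  "hop w z \<sigma> = (if w \<in> \<sigma> then sg w (\<sigma> - {w}) * z (\<sigma> - {w}) else 0)"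

lemma bdV_hop:
  fixes z :: "'a::linorder set \<Rightarrow> 'f::field"
  assumes V: "finite V" and w: "w \<in> V" and fin: "\<And>\<sigma>. z \<sigma> \<noteq> 0 \<Longrightarrow> finite \<sigma>"
    and cyc: "bdV V z = 0"
  shows "bdV V (hop w z) = z"
proof (rule ext)
  fix \<tau>
  show "bdV V (hop w z) \<tau> = z \<tau>"
  proof (cases "w \<in> \<tau>")
    case False
    have "bdV V (hop w z) \<tau> = sg w \<tau> * hop w z (insert w \<tau>) + (\<Sum>v\<in>V - \<tau> - {w}. sg v \<tau> * hop w z (insert v \<tau>))"
      unfolding bdV_def by (rule sum.remove) (use V w False in auto)
    also have "(\<Sum>v\<in>V - \<tau> - {w}. sg v \<tau> * hop w z (insert v \<tau>)) = 0"
      using False by (intro sum.neutral) (auto simp: hop_def)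
    also have "insert w \<tau> - {w} = \<tau>" using False by auto
    hence "sg w \<tau> * hop w z (insert w \<tau>) = sg w \<tau> * sg w \<tau> * z \<tau>" by (simp add: hop_def)
    finally show ?thesis by (simp add: sg_sq)
  next
    case True
    define \<tau>' where "\<tau>' = \<tau> - {w}"
    have t: "\<tau> = insert w \<tau>'" "w \<notin> \<tau>'" using True unfolding \<tau>'_def by auto
    have hv: "hop w z (insert v \<tau>) = sg w (insert v \<tau>') * z (insert v \<tau>')" if "v \<in> V - \<tau>" for v
    proof -
      have "insert v \<tau> - {w} = insert v \<tau>'" using that t by auto
      thus ?thesis using True by (simp add: hop_def)
    qed
    show ?thesis
    proof (cases "finite \<tau>")
      case False
      hence "\<not> finite (insert v \<tau>')" for v using t by auto
      hence z0: "z (insert v \<tau>') = 0" for v using fin by blast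
      have "z \<tau> = 0" using fin False by blast
      thus ?thesis unfolding bdV_def using hv z0 by simp
    next
      case True
      hence ft: "finite \<tau>'" using t by auto
      have sw: "sg v \<tau> * sg w (insert v \<tau>') = - (sg v \<tau>' * sg w \<tau>' :: 'f)" if "v \<in> V - \<tau>" for v
      proof -
        have "v \<notin> \<tau>'" "w \<noteq> v" using that t by auto
        from sg_swap[OF ft t(2) this] show ?thesis unfolding t(1)[symmetric] .
      qed
      have "bdV V (hop w z) \<tau> = (\<Sum>v\<in>V - \<tau>. - sg w \<tau>' * (sg v \<tau>' * z (insert v \<tau>')))"
        unfolding bdV_def
      proof (rule sum.cong[OF refl])
        fix v assume v: "v \<in> V - \<tau>"
        have "sg v \<tau> * hop w z (insert v \<tau>) = (sg v \<tau> * sg w (insert v \<tau>')) * z (insert v \<tau>')"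
          using hv[OF v] by simp
        also have "\<dots> = - sg w \<tau>' * (sg v \<tau>' * z (insert v \<tau>'))" using sw[OF v] by simp
        finally show "sg v \<tau> * hop w z (insert v \<tau>) = - sg w \<tau>' * (sg v \<tau>' * z (insert v \<tau>'))" .
      qed
      also have "\<dots> = - sg w \<tau>' * (\<Sum>v\<in>V - \<tau>. sg v \<tau>' * z (insert v \<tau>'))"
        by (simp add: sum_distrib_left)
      also have "(\<Sum>v\<in>V - \<tau>. sg v \<tau>' * z (insert v \<tau>')) = - (sg w \<tau>' * z \<tau>)"
      proof -
        have eqV: "V - \<tau>' = insert w (V - \<tau>)" using t w by auto
        have "bdV V z \<tau>' = 0" using cyc by simp
        hence "(\<Sum>v\<in>V - \<tau>'. sg v \<tau>' * z (insert v \<tau>')) = 0" unfolding bdV_def .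
        hence s0: "(\<Sum>v\<in>insert w (V - \<tau>). sg v \<tau>' * z (insert v \<tau>')) = 0" unfolding eqV .
        have "(\<Sum>v\<in>insert w (V - \<tau>). sg v \<tau>' * z (insert v \<tau>')) =
              sg w \<tau>' * z (insert w \<tau>') + (\<Sum>v\<in>V - \<tau>. sg v \<tau>' * z (insert v \<tau>'))"
          by (rule sum.insert) (use V \<open>w \<in> \<tau>\<close> in auto)
        hence "sg w \<tau>' * z \<tau> + (\<Sum>v\<in>V - \<tau>. sg v \<tau>' * z (insert v \<tau>')) = 0"
          using s0 unfolding t(1)[symmetric] by simp
        thus ?thesis by (metis add.commute eq_neg_iff_add_eq_0)
      qed
      finally show ?thesis by (simp add: mult.assoc[symmetric] sg_sq)
    qed
  qed
qed


definition cx :: "'a set \<Rightarrow> 'a set set \<Rightarrow> bool" where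
  "cx V X \<longleftrightarrow> X \<subseteq> Pow V \<and> (\<forall>\<sigma>\<in>X. \<forall>\<tau>. \<tau> \<subseteq> \<sigma> \<longrightarrow> \<tau> \<in> X)"

definition Zs :: "'a::linorder set \<Rightarrow> 'f::field itself \<Rightarrow> int \<Rightarrow> 'a set set \<Rightarrow> ('a set \<Rightarrow> 'f) set" where
  "Zs V F k X = {c \<in> chains F k X. bdV V c = 0}"

definition Bs :: "'a::linorder set \<Rightarrow> 'f::field itself \<Rightarrow> int \<Rightarrow> 'a set set \<Rightarrow> ('a set \<Rightarrow> 'f) set" where
  "Bs V F k X = bdV V ` chains F (k + 1) X"

lemma add_nz: "(x::'b \<Rightarrow> 'f::field) s + y s \<noteq> 0 \<Longrightarrow> x s \<noteq> 0 \<or> y s \<noteq> 0"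
  by auto

lemma ch_sub: "fs.subspace (chains F k X)"
proof -
  have h1: "0 \<in> chains F k X" by (simp add: chains_def)
  have h2: "x + y \<in> chains F k X" if "x \<in> chains F k X" "y \<in> chains F k X" for x y
    unfolding chains_def
  proof (intro CollectI allI impI)
    fix \<sigma> assume "(x + y) \<sigma> \<noteq> 0"
    hence "x \<sigma> \<noteq> 0 \<or> y \<sigma> \<noteq> 0" by (intro add_nz) simp
    thus "\<sigma> \<in> X \<and> finite \<sigma> \<and> int (card \<sigma>) = k + 1" using that unfolding chains_def by blast
  qed
  have h3: "fscale a x \<in> chains F k X" if "x \<in> chains F k X" for a x
    using that unfolding chains_def fscale_def by auto
  show ?thesis unfolding fs.subspace_def using h1 h2 h3 by blast
qed

definition dl :: "'b \<Rightarrow> ('b \<Rightarrow> 'f::field)" where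
  "dl s = (\<lambda>t. if t = s then 1 else 0)"

lemma fun_expand:
  fixes c :: "'b \<Rightarrow> 'f::field"
  assumes "finite S" "\<And>s. c s \<noteq> 0 \<Longrightarrow> s \<in> S"
  shows "c = (\<Sum>s\<in>S. fscale (c s) (dl s))"
proof (rule ext)
  fix t
  have "(\<Sum>s\<in>S. fscale (c s) (dl s)) t = (\<Sum>s\<in>S. c s * dl s t)"
    by (simp add: sum_fun_apply fscale_def)
  also have "\<dots> = (if t \<in> S then c t else 0)"
    using assms(1) by (simp add: dl_def if_distrib sum.delta cong: if_cong)
  also have "\<dots> = c t" using assms(2) by auto
  finally show "c t = (\<Sum>s\<in>S. fscale (c s) (dl s)) t" by simp
qed

lemma ch_fd:
  assumes "finite V" "X \<subseteq> Pow V"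
  shows "fd (chains F k X :: ('a set \<Rightarrow> 'f::field) set)"
proof -
  have fX: "finite X" using assms finite_subset by blast
  have "chains F k X \<subseteq> fs.span (dl ` X)"
  proof
    fix c :: "'a set \<Rightarrow> 'f" assume "c \<in> chains F k X"
    hence "c = (\<Sum>s\<in>X. fscale (c s) (dl s))" using fX by (intro fun_expand) (auto simp: chains_def)
    also have "\<dots> \<in> fs.span (dl ` X)" by (intro fs.span_sum fs.span_scale fs.span_base) auto
    finally show "c \<in> fs.span (dl ` X)" .
  qed
  moreover have "finite (dl ` X)" using fX by simp
  ultimately show ?thesis unfolding fd_def by blast
qed

lemma ch_bd:
  assumes "cx V X" "c \<in> chains F (k + 1) X"
  shows "bdV V c \<in> chains F k X"
  unfolding chains_def
proof (intro CollectI allI impI)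
  fix \<tau> assume "bdV V c \<tau> \<noteq> 0"
  have "\<exists>v\<in>V - \<tau>. c (insert v \<tau>) \<noteq> 0"
  proof (rule ccontr)
    assume "\<not> (\<exists>v\<in>V - \<tau>. c (insert v \<tau>) \<noteq> 0)"
    hence "bdV V c \<tau> = 0" unfolding bdV_def by simp
    thus False using \<open>bdV V c \<tau> \<noteq> 0\<close> by simp
  qed
  then obtain v where v: "v \<in> V - \<tau>" "c (insert v \<tau>) \<noteq> 0" by blast
  hence "insert v \<tau> \<in> X" "finite (insert v \<tau>)" "int (card (insert v \<tau>)) = k + 2"
    using assms(2) unfolding chains_def by auto
  moreover have "card (insert v \<tau>) = Suc (card \<tau>)" using v \<open>finite (insert v \<tau>)\<close> by auto
  ultimately show "\<tau> \<in> X \<and> finite \<tau> \<and> int (card \<tau>) = k + 1"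
    using assms(1) unfolding cx_def by auto
qed

lemma bd_eq:
  assumes "finite V" "X \<subseteq> Pow V" "c \<in> chains F k X"
  shows "bd c = bdV V c"
proof (rule ext)
  fix \<tau>
  have sub: "{v. v \<notin> \<tau> \<and> c (insert v \<tau>) \<noteq> 0} \<subseteq> V - \<tau>"
    using assms(2,3) unfolding chains_def by auto
  show "bd c \<tau> = bdV V c \<tau>"
    unfolding bd_def bdV_def sg_def
    by (rule sum.mono_neutral_left) (use assms(1) sub in \<open>auto simp: sg_def\<close>)
qed

lemma cycles_eq:
  assumes "finite V" "X \<subseteq> Pow V"
  shows "cycles F k X = Zs V F k X"
proof (rule set_eqI)
  fix c
  show "c \<in> cycles F k X \<longleftrightarrow> c \<in> Zs V F k X"
  proof (cases "c \<in> chains F k X")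
    case True
    hence "bd c = bdV V c" by (rule bd_eq[OF assms])
    thus ?thesis unfolding cycles_def Zs_def by (simp add: zero_fun_def)
  qed (simp add: cycles_def Zs_def)
qed

lemma boundaries_eq:
  assumes "finite V" "X \<subseteq> Pow V"
  shows "boundaries F k X = Bs V F k X"
  unfolding boundaries_def Bs_def using bd_eq[OF assms] by (intro image_cong) auto

lemma Zs_sub: "fs.subspace (Zs V F k X)"
proof -
  interpret b: module_hom fscale fscale "bdV V" by (rule bdV_hom)
  have "Zs V F k X = chains F k X \<inter> {c. bdV V c = 0}" unfolding Zs_def by auto
  thus ?thesis using fs.subspace_inter[OF ch_sub b.subspace_kernel] by simp
qed

lemma Bs_sub: "fs.subspace (Bs V F k X)"
proof -
  interpret b: module_hom fscale fscale "bdV V" by (rule bdV_hom)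
  show ?thesis unfolding Bs_def by (rule b.subspace_image[OF ch_sub])
qed

lemma Zs_ch: "Zs V F k X \<subseteq> chains F k X" unfolding Zs_def by auto

lemma Bs_ch: "cx V X \<Longrightarrow> Bs V F k X \<subseteq> chains F k X"
  unfolding Bs_def using ch_bd by blast

lemma Bs_Zs:
  assumes "finite V" "cx V X"
  shows "Bs V F k X \<subseteq> Zs V F k X"
proof
  fix b assume "b \<in> Bs V F k X"
  then obtain c where c: "c \<in> chains F (k + 1) X" "b = bdV V c" unfolding Bs_def by blast
  have "bdV V b = 0" unfolding c(2)
    by (rule bdV_bdV[OF assms(1)]) (use c(1) in \<open>auto simp: chains_def\<close>)
  thus "b \<in> Zs V F k X" unfolding Zs_def using ch_bd[OF assms(2) c(1)] c(2) by auto
qed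

lemma hop_ch:
  assumes "cx V X" "\<And>\<sigma>. \<sigma> \<in> X \<Longrightarrow> insert w \<sigma> \<in> X" "z \<in> chains F k X"
  shows "hop w z \<in> chains F (k + 1) X"
  unfolding chains_def
proof (intro CollectI allI impI)
  fix \<sigma> assume "hop w z \<sigma> \<noteq> 0"
  hence w: "w \<in> \<sigma>" and nz: "z (\<sigma> - {w}) \<noteq> 0" unfolding hop_def by (auto split: if_splits)
  hence "\<sigma> - {w} \<in> X" "finite (\<sigma> - {w})" "int (card (\<sigma> - {w})) = k + 1"
    using assms(3) unfolding chains_def by auto
  moreover have "\<sigma> = insert w (\<sigma> - {w})" using w by auto
  ultimately have A: "\<sigma> - {w} \<in> X" "finite (\<sigma> - {w})" "int (card (\<sigma> - {w})) = k + 1"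
    "\<sigma> = insert w (\<sigma> - {w})" by blast+
  have "card (insert w (\<sigma> - {w})) = Suc (card (\<sigma> - {w}))"
    using A(2) by (rule card_insert_disjoint) simp
  moreover have "card \<sigma> = card (insert w (\<sigma> - {w}))" by (rule arg_cong[where f=card, OF A(4)])
  ultimately have c: "int (card \<sigma>) = k + 1 + 1" using A(3) by simp
  have "insert w (\<sigma> - {w}) \<in> X" using assms(2) A(1) by blast
  hence "\<sigma> \<in> X" using A(4) by simp
  moreover have "finite \<sigma>" using A(2) by simp
  ultimately show "\<sigma> \<in> X \<and> finite \<sigma> \<and> int (card \<sigma>) = k + 1 + 1" using c by blast
qed

lemma cone_Zs_Bs:
  assumes "finite V" "cx V X" "w \<in> V" "\<And>\<sigma>. \<sigma> \<in> X \<Longrightarrow> insert w \<sigma> \<in> X"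
  shows "Zs V F k X \<subseteq> Bs V F k X"
proof
  fix z assume "z \<in> Zs V F k X"
  hence z: "z \<in> chains F k X" "bdV V z = 0" unfolding Zs_def by auto
  have "bdV V (hop w z) = z"
    by (rule bdV_hop[OF assms(1,3) _ z(2)]) (use z(1) in \<open>auto simp: chains_def\<close>)
  moreover have "hop w z \<in> chains F (k + 1) X" by (rule hop_ch[OF assms(2,4) z(1)])
  ultimately show "z \<in> Bs V F k X" unfolding Bs_def by force
qed

lemma rank:
  assumes "finite V" "cx V X"
  shows "fs.dim (chains F k X) = fs.dim (Zs V F k X) + fs.dim (Bs V F (k - 1) X)"
proof -
  have "fs.dim (chains F k X) = fs.dim {x \<in> chains F k X. bdV V x = 0} + fs.dim (bdV V ` chains F k X)"
    by (rule rank_nullity[OF ch_sub ch_fd bdV_hom]) (use assms in \<open>auto simp: cx_def\<close>)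
  thus ?thesis unfolding Zs_def Bs_def by simp
qed

lemma ch_Un: "chains F k (A \<union> B) = ssum (chains F k A) (chains F k B)"
proof (rule set_eqI, rule iffI)
  fix c assume c: "c \<in> chains F k (A \<union> B)"
  let ?a = "\<lambda>s. if s \<in> A then c s else 0" and ?b = "\<lambda>s. if s \<in> A then 0 else c s"
  have "?a \<in> chains F k A" "?b \<in> chains F k B" using c unfolding chains_def by auto
  moreover have "c = ?a + ?b" by (rule ext) simp
  ultimately show "c \<in> ssum (chains F k A) (chains F k B)" unfolding ssum_def by blast
next
  fix c assume "c \<in> ssum (chains F k A) (chains F k B)"
  then obtain a b where ab: "a \<in> chains F k A" "b \<in> chains F k B" "c = a + b" unfolding ssum_def by blast
  show "c \<in> chains F k (A \<union> B)" unfolding chains_def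
  proof (intro CollectI allI impI)
    fix \<sigma> assume "c \<sigma> \<noteq> 0"
    hence "a \<sigma> \<noteq> 0 \<or> b \<sigma> \<noteq> 0" using ab(3) by (intro add_nz) simp
    thus "\<sigma> \<in> A \<union> B \<and> finite \<sigma> \<and> int (card \<sigma>) = k + 1" using ab(1,2) unfolding chains_def by blast
  qed
qed

lemma ch_Int: "chains F k A \<inter> chains F k B = chains F k (A \<inter> B)"
  unfolding chains_def by auto

lemma Bs_Un: "Bs V F k (A \<union> B) = ssum (Bs V F k A) (Bs V F k B)"
proof -
  have "bdV V ` ssum P Q = ssum (bdV V ` P) (bdV V ` Q)" for P Q :: "('a set \<Rightarrow> 'b) set"
  proof (rule set_eqI, rule iffI)
    fix y assume "y \<in> bdV V ` ssum P Q"
    then obtain p q where "p \<in> P" "q \<in> Q" "y = bdV V (p + q)" unfolding ssum_def by blast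
    hence "y = bdV V p + bdV V q" "bdV V p \<in> bdV V ` P" "bdV V q \<in> bdV V ` Q" by (auto simp: bdV_add)
    thus "y \<in> ssum (bdV V ` P) (bdV V ` Q)" unfolding ssum_def by blast
  next
    fix y assume "y \<in> ssum (bdV V ` P) (bdV V ` Q)"
    then obtain p q where "p \<in> P" "q \<in> Q" "y = bdV V p + bdV V q" unfolding ssum_def by blast
    hence "y = bdV V (p + q)" "p + q \<in> ssum P Q" unfolding ssum_def by (auto simp: bdV_add)
    thus "y \<in> bdV V ` ssum P Q" by blast
  qed
  thus ?thesis unfolding Bs_def ch_Un by simp
qed

lemma Zs_Int: "Zs V F k A \<inter> Zs V F k B = Zs V F k (A \<inter> B)"
  unfolding Zs_def chains_def by auto


lemma cx_Un: "cx V A \<Longrightarrow> cx V B \<Longrightarrow> cx V (A \<union> B)"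
  unfolding cx_def by (intro conjI Un_least ballI allI impI; elim conjE UnE) auto

lemma cx_Int: "cx V A \<Longrightarrow> cx V B \<Longrightarrow> cx V (A \<inter> B)"
  unfolding cx_def by (intro conjI ballI allI impI; elim conjE IntE) auto

lemma fd_ch: "finite V \<Longrightarrow> cx V X \<Longrightarrow> fd (chains F k X :: ('a set \<Rightarrow> 'f::field) set)"
  by (rule ch_fd) (auto simp: cx_def)

lemma fd_Zs: "finite V \<Longrightarrow> cx V X \<Longrightarrow> fd (Zs V F k X :: ('a::linorder set \<Rightarrow> 'f::field) set)"
  by (rule fd_mono[OF fd_ch Zs_ch])

lemma fd_Bs: "finite V \<Longrightarrow> cx V X \<Longrightarrow> fd (Bs V F k X :: ('a::linorder set \<Rightarrow> 'f::field) set)"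
  by (rule fd_mono[OF fd_ch Bs_ch])

lemma cone_eq:
  assumes "finite V" "cx V X" "w \<in> V" "\<And>\<sigma>. \<sigma> \<in> X \<Longrightarrow> insert w \<sigma> \<in> X"
  shows "Bs V F k X = Zs V F k X"
  using Bs_Zs[OF assms(1,2)] cone_Zs_Bs[OF assms] by (rule subset_antisym)

lemma cu:
  assumes "finite V" "cx V A" "cx V B"
  shows "fs.dim (chains F k (A \<union> B)) + fs.dim (chains F k (A \<inter> B)) =
         fs.dim (chains F k A) + fs.dim (chains F k B :: ('a set \<Rightarrow> 'f::field) set)"
proof -
  have "fs.dim (ssum (chains F k A) (chains F k B)) + fs.dim (chains F k A \<inter> chains F k B) =
        fs.dim (chains F k A) + fs.dim (chains F k B :: ('a set \<Rightarrow> 'f::field) set)"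
    by (rule sum_formula[OF ch_sub fd_ch[OF assms(1,2)] ch_sub fd_ch[OF assms(1,3)]])
  thus ?thesis unfolding ch_Un ch_Int[symmetric] .
qed

lemma bu:
  assumes "finite V" "cx V A" "cx V B"
  shows "fs.dim (Bs V F k (A \<union> B)) + fs.dim (Bs V F k A \<inter> Bs V F k B) =
         fs.dim (Bs V F k A) + fs.dim (Bs V F k B :: ('a::linorder set \<Rightarrow> 'f::field) set)"
proof -
  have "fs.dim (ssum (Bs V F k A) (Bs V F k B)) + fs.dim (Bs V F k A \<inter> Bs V F k B) =
        fs.dim (Bs V F k A) + fs.dim (Bs V F k B :: ('a::linorder set \<Rightarrow> 'f::field) set)"
    by (rule sum_formula[OF Bs_sub fd_Bs[OF assms(1,2)] Bs_sub fd_Bs[OF assms(1,3)]])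
  thus ?thesis unfolding Bs_Un .
qed

lemma MV1:
  fixes F :: "'f::field itself"
  assumes V: "finite V" and cA: "cx V (A::'a::linorder set set)" and cS: "cx V S" and w: "w \<in> V"
    and cone: "\<And>\<sigma>. \<sigma> \<in> S \<Longrightarrow> insert w \<sigma> \<in> S"
  shows "int (fs.dim (Zs V F k (A \<union> S))) - int (fs.dim (Bs V F k (A \<union> S))) =
    int (fs.dim (Zs V F k A)) - int (fs.dim (Bs V F k A))
    + (int (fs.dim (Zs V F (k - 1) (A \<inter> S) \<inter> Bs V F (k - 1) A)) - int (fs.dim (Bs V F (k - 1) (A \<inter> S))))
    - (int (fs.dim (ssum (Zs V F k (A \<inter> S)) (Bs V F k A))) - int (fs.dim (Bs V F k A)))"
proof -
  have cX: "cx V (A \<union> S)" by (rule cx_Un[OF cA cS])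
  have cI: "cx V (A \<inter> S)" by (rule cx_Int[OF cA cS])
  have bS: "Bs V F j S = Zs V F j S" for j by (rule cone_eq[OF V cS w cone])
  have m: "Bs V F j A \<inter> Bs V F j S = Zs V F j (A \<inter> S) \<inter> Bs V F j A" for j
  proof -
    have sub: "Bs V F j A \<subseteq> Zs V F j A" by (rule Bs_Zs[OF V cA])
    have e1: "Zs V F j (A \<inter> S) = Zs V F j A \<inter> Zs V F j S" by (rule Zs_Int[symmetric])
    show ?thesis unfolding e1 bS using sub by blast
  qed
  have rX: "fs.dim (chains F k (A \<union> S)) = fs.dim (Zs V F k (A \<union> S)) + fs.dim (Bs V F (k - 1) (A \<union> S))"
    by (rule rank[OF V cX])
  have rA: "fs.dim (chains F k A) = fs.dim (Zs V F k A) + fs.dim (Bs V F (k - 1) A)"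
    by (rule rank[OF V cA])
  have rS: "fs.dim (chains F k S) = fs.dim (Zs V F k S) + fs.dim (Bs V F (k - 1) S)"
    by (rule rank[OF V cS])
  have rI: "fs.dim (chains F k (A \<inter> S)) = fs.dim (Zs V F k (A \<inter> S)) + fs.dim (Bs V F (k - 1) (A \<inter> S))"
    by (rule rank[OF V cI])
  have c: "fs.dim (chains F k (A \<union> S)) + fs.dim (chains F k (A \<inter> S)) =
         fs.dim (chains F k A) + fs.dim (chains F k S)" by (rule cu[OF V cA cS])
  have b1: "fs.dim (Bs V F (k - 1) (A \<union> S)) + fs.dim (Zs V F (k - 1) (A \<inter> S) \<inter> Bs V F (k - 1) A) =
         fs.dim (Bs V F (k - 1) A) + fs.dim (Bs V F (k - 1) S)"
    using bu[OF V cA cS, of F "k - 1"] unfolding m .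
  have b2: "fs.dim (Bs V F k (A \<union> S)) + fs.dim (Zs V F k (A \<inter> S) \<inter> Bs V F k A) =
         fs.dim (Bs V F k A) + fs.dim (Bs V F k S)"
    using bu[OF V cA cS, of F k] unfolding m .
  have sf: "fs.dim (ssum (Zs V F k (A \<inter> S)) (Bs V F k A)) + fs.dim (Zs V F k (A \<inter> S) \<inter> Bs V F k A) =
         fs.dim (Zs V F k (A \<inter> S)) + fs.dim (Bs V F k A)"
    by (rule sum_formula[OF Zs_sub fd_Zs[OF V cI] Bs_sub fd_Bs[OF V cA]])
  have zS: "fs.dim (Zs V F k S) = fs.dim (Bs V F k S)" using bS by simp
  show ?thesis using rX rA rS rI c b1 b2 sf zS by linarith
qed

lemma MV2:
  fixes F :: "'f::field itself"
  assumes V: "finite V" and cA: "cx V (A::'a::linorder set set)" and cB: "cx V B"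
    and a: "a \<in> V" and coneA: "\<And>\<sigma>. \<sigma> \<in> A \<Longrightarrow> insert a \<sigma> \<in> A"
    and b: "b \<in> V" and coneB: "\<And>\<sigma>. \<sigma> \<in> B \<Longrightarrow> insert b \<sigma> \<in> B"
  shows "int (fs.dim (Zs V F j (A \<union> B))) - int (fs.dim (Bs V F j (A \<union> B))) =
    int (fs.dim (Zs V F (j - 1) (A \<inter> B))) - int (fs.dim (Bs V F (j - 1) (A \<inter> B)))"
proof -
  have cX: "cx V (A \<union> B)" by (rule cx_Un[OF cA cB])
  have cI: "cx V (A \<inter> B)" by (rule cx_Int[OF cA cB])
  have eA: "Bs V F i A = Zs V F i A" for i by (rule cone_eq[OF V cA a coneA])
  have eB: "Bs V F i B = Zs V F i B" for i by (rule cone_eq[OF V cB b coneB])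
  have m: "Bs V F i A \<inter> Bs V F i B = Zs V F i (A \<inter> B)" for i
    unfolding eA eB by (rule Zs_Int)
  have rX: "fs.dim (chains F j (A \<union> B)) = fs.dim (Zs V F j (A \<union> B)) + fs.dim (Bs V F (j - 1) (A \<union> B))"
    by (rule rank[OF V cX])
  have rA: "fs.dim (chains F j A) = fs.dim (Zs V F j A) + fs.dim (Bs V F (j - 1) A)"
    by (rule rank[OF V cA])
  have rB: "fs.dim (chains F j B) = fs.dim (Zs V F j B) + fs.dim (Bs V F (j - 1) B)"
    by (rule rank[OF V cB])
  have rI: "fs.dim (chains F j (A \<inter> B)) = fs.dim (Zs V F j (A \<inter> B)) + fs.dim (Bs V F (j - 1) (A \<inter> B))"
    by (rule rank[OF V cI])
  have c: "fs.dim (chains F j (A \<union> B)) + fs.dim (chains F j (A \<inter> B)) =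
         fs.dim (chains F j A) + fs.dim (chains F j B)" by (rule cu[OF V cA cB])
  have b1: "fs.dim (Bs V F (j - 1) (A \<union> B)) + fs.dim (Zs V F (j - 1) (A \<inter> B)) =
         fs.dim (Bs V F (j - 1) A) + fs.dim (Bs V F (j - 1) B)"
    using bu[OF V cA cB, of F "j - 1"] unfolding m .
  have b2: "fs.dim (Bs V F j (A \<union> B)) + fs.dim (Zs V F j (A \<inter> B)) =
         fs.dim (Bs V F j A) + fs.dim (Bs V F j B)"
    using bu[OF V cA cB, of F j] unfolding m .
  have zA: "fs.dim (Zs V F j A) = fs.dim (Bs V F j A)" using eA by simp
  have zB: "fs.dim (Zs V F j B) = fs.dim (Bs V F j B)" using eB by simp
  show ?thesis using rX rA rB rI c b1 b2 zA zB by linarith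
qed

lemma FF:
  fixes F :: "'f::field itself"
  assumes V: "finite V" and cL: "cx V (L::'a::linorder set set)" and cK: "cx V K"
  shows "(int (fs.dim (Zs V F j L \<inter> Bs V F j K)) - int (fs.dim (Bs V F j L)))
       + (int (fs.dim (ssum (Zs V F j L) (Bs V F j K))) - int (fs.dim (Bs V F j K)))
       = int (fs.dim (Zs V F j L)) - int (fs.dim (Bs V F j L))"
proof -
  have "fs.dim (ssum (Zs V F j L) (Bs V F j K)) + fs.dim (Zs V F j L \<inter> Bs V F j K) =
         fs.dim (Zs V F j L) + fs.dim (Bs V F j K)"
    by (rule sum_formula[OF Zs_sub fd_Zs[OF V cL] Bs_sub fd_Bs[OF V cK]])
  thus ?thesis by linarith
qed


lemma cx_clique: "cx V (clique_complex V E)"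
  unfolding cx_def clique_complex_def
proof (intro conjI ballI allI impI)
  show "{\<sigma>. \<sigma> \<subseteq> V \<and> finite \<sigma> \<and> (\<forall>x\<in>\<sigma>. \<forall>y\<in>\<sigma>. x \<noteq> y \<longrightarrow> {x, y} \<in> E)} \<subseteq> Pow V" by auto
next
  fix \<sigma> \<tau> assume s: "\<sigma> \<in> {\<sigma>. \<sigma> \<subseteq> V \<and> finite \<sigma> \<and> (\<forall>x\<in>\<sigma>. \<forall>y\<in>\<sigma>. x \<noteq> y \<longrightarrow> {x, y} \<in> E)}"
    and t: "\<tau> \<subseteq> \<sigma>"
  have "finite \<tau>" using s t finite_subset by auto
  thus "\<tau> \<in> {\<sigma>. \<sigma> \<subseteq> V \<and> finite \<sigma> \<and> (\<forall>x\<in>\<sigma>. \<forall>y\<in>\<sigma>. x \<noteq> y \<longrightarrow> {x, y} \<in> E)}"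
    using s t by auto
qed

lemma cx_down: "cx V X \<Longrightarrow> \<sigma> \<in> X \<Longrightarrow> \<tau> \<subseteq> \<sigma> \<Longrightarrow> \<tau> \<in> X"
  unfolding cx_def by blast

lemma cx_pow: "cx V X \<Longrightarrow> X \<subseteq> Pow V"
  unfolding cx_def by blast

lemma St_iff:
  assumes "cx V K'"
  shows "\<tau> \<in> closed_star K' e \<longleftrightarrow> \<tau> \<union> e \<in> K'"
proof
  assume "\<tau> \<in> closed_star K' e"
  then obtain \<rho> where "\<rho> \<in> K'" "e \<subseteq> \<rho>" "\<tau> \<subseteq> \<rho>" unfolding closed_star_def by blast
  moreover have "\<tau> \<union> e \<subseteq> \<rho>" using calculation by blast
  ultimately show "\<tau> \<union> e \<in> K'" using cx_down[OF assms] by blast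
next
  assume "\<tau> \<union> e \<in> K'"
  thus "\<tau> \<in> closed_star K' e" unfolding closed_star_def by blast
qed

lemma cx_St:
  assumes "cx V K'"
  shows "cx V (closed_star K' e)"
  unfolding cx_def
proof (intro conjI ballI allI impI subsetI)
  fix \<tau> assume "\<tau> \<in> closed_star K' e"
  hence "\<tau> \<union> e \<in> K'" using St_iff[OF assms] by blast
  hence "\<tau> \<union> e \<subseteq> V" using cx_pow[OF assms] by blast
  thus "\<tau> \<in> Pow V" by blast
next
  fix \<sigma> \<tau> assume "\<sigma> \<in> closed_star K' e" "\<tau> \<subseteq> \<sigma>"
  hence "\<sigma> \<union> e \<in> K'" "\<tau> \<union> e \<subseteq> \<sigma> \<union> e" using St_iff[OF assms] by blast+
  hence "\<tau> \<union> e \<in> K'" using cx_down[OF assms] by blast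
  thus "\<tau> \<in> closed_star K' e" using St_iff[OF assms] by blast
qed

lemma clique_drop:
  assumes "\<tau> \<in> clique_complex V (insert {a, b} E)" "\<not> (a \<in> \<tau> \<and> b \<in> \<tau>)"
  shows "\<tau> \<in> clique_complex V E"
proof -
  have t: "\<tau> \<subseteq> V" "finite \<tau>" "\<forall>x\<in>\<tau>. \<forall>y\<in>\<tau>. x \<noteq> y \<longrightarrow> {x, y} \<in> insert {a, b} E"
    using assms(1) unfolding clique_complex_def by auto
  have "{x, y} \<in> E" if "x \<in> \<tau>" "y \<in> \<tau>" "x \<noteq> y" for x y
  proof -
    have "{x, y} \<noteq> {a, b}"
    proof
      assume eq: "{x, y} = {a, b}"
      have "a \<in> {a, b}" "b \<in> {a, b}" by simp_all
      hence "a \<in> {x, y}" "b \<in> {x, y}" unfolding eq .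
      hence "a \<in> \<tau>" "b \<in> \<tau>" using that(1,2) by blast+
      thus False using assms(2) by blast
    qed
    moreover have "{x, y} \<in> insert {a, b} E" using t(3) that by blast
    ultimately show ?thesis by blast
  qed
  thus ?thesis unfolding clique_complex_def using t by auto
qed

definition Ha :: "'a set \<Rightarrow> 'a set set \<Rightarrow> 'a \<Rightarrow> 'a \<Rightarrow> 'a set set" where
  "Ha V E a b = {\<tau> \<in> clique_complex V E \<inter> closed_star (clique_complex V (insert {a, b} E)) {a, b}. b \<notin> \<tau>}"

context
  fixes V :: "'a::linorder set" and E :: "'a set set" and a b :: 'a
  assumes ab: "a \<in> V" "b \<in> V" "a \<noteq> b" "{a, b} \<notin> E"
begin

abbreviation "KK \<equiv> clique_complex V E"
abbreviation "KK' \<equiv> clique_complex V (insert {a, b} E)"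
abbreviation "St \<equiv> closed_star KK' {a, b}"

lemma e_in: "{a, b} \<in> KK'"
  unfolding clique_complex_def using ab by auto

lemma K_sub: "KK \<subseteq> KK'"
  unfolding clique_complex_def by auto

lemma K'_eq: "KK' = KK \<union> St"
proof (rule set_eqI, rule iffI)
  fix \<tau> assume t: "\<tau> \<in> KK'"
  show "\<tau> \<in> KK \<union> St"
  proof (cases "a \<in> \<tau> \<and> b \<in> \<tau>")
    case True
    hence "\<tau> \<union> {a, b} = \<tau>" by auto
    hence "\<tau> \<in> St" using St_iff[OF cx_clique] t by metis
    thus ?thesis by blast
  next
    case False
    have "\<tau> \<in> KK" by (rule clique_drop[OF t False])
    thus ?thesis by blast
  qed
next
  fix \<tau> assume "\<tau> \<in> KK \<union> St"
  thus "\<tau> \<in> KK'"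
  proof
    assume "\<tau> \<in> KK" thus ?thesis using K_sub by blast
  next
    assume "\<tau> \<in> St"
    hence "\<tau> \<union> {a, b} \<in> KK'" using St_iff[OF cx_clique] by blast
    thus ?thesis using cx_down[OF cx_clique] by blast
  qed
qed

lemma St_cone: "\<sigma> \<in> St \<Longrightarrow> insert a \<sigma> \<in> St"
proof -
  assume "\<sigma> \<in> St"
  hence "\<sigma> \<union> {a, b} \<in> KK'" using St_iff[OF cx_clique] by blast
  moreover have "insert a \<sigma> \<union> {a, b} = \<sigma> \<union> {a, b}" by auto
  ultimately show "insert a \<sigma> \<in> St" using St_iff[OF cx_clique] by metis
qed


lemma Ha_cone: "\<sigma> \<in> Ha V E a b \<Longrightarrow> insert a \<sigma> \<in> Ha V E a b"
proof -
  assume s: "\<sigma> \<in> Ha V E a b"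
  hence s1: "\<sigma> \<in> KK" "\<sigma> \<in> St" "b \<notin> \<sigma>" unfolding Ha_def by auto
  have "insert a \<sigma> \<in> St" by (rule St_cone[OF s1(2)])
  hence "insert a \<sigma> \<in> KK'" using K'_eq by blast
  moreover have "b \<notin> insert a \<sigma>" using s1(3) ab(3) by auto
  ultimately have "insert a \<sigma> \<in> KK" by (rule_tac clique_drop) auto
  thus ?thesis using \<open>insert a \<sigma> \<in> St\<close> \<open>b \<notin> insert a \<sigma>\<close> unfolding Ha_def by blast
qed

lemma cx_Ha: "cx V (Ha V E a b)"
  unfolding cx_def
proof (intro conjI ballI allI impI subsetI)
  fix \<tau> assume "\<tau> \<in> Ha V E a b"
  thus "\<tau> \<in> Pow V" unfolding Ha_def clique_complex_def by auto
next
  fix \<sigma> \<tau> assume "\<sigma> \<in> Ha V E a b" "\<tau> \<subseteq> \<sigma>"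
  moreover have "cx V (KK \<inter> St)" by (rule cx_Int[OF cx_clique cx_St[OF cx_clique]])
  ultimately show "\<tau> \<in> Ha V E a b" unfolding Ha_def using cx_down by blast
qed

lemma L_split: "KK \<inter> St = Ha V E a b \<union> {\<tau> \<in> KK \<inter> St. a \<notin> \<tau>}"
proof (rule set_eqI, rule iffI)
  fix \<tau> assume t: "\<tau> \<in> KK \<inter> St"
  have "\<not> (a \<in> \<tau> \<and> b \<in> \<tau>)"
  proof
    assume "a \<in> \<tau> \<and> b \<in> \<tau>"
    hence "{a, b} \<in> E" using t ab(3) unfolding clique_complex_def by auto
    thus False using ab(4) by blast
  qed
  thus "\<tau> \<in> Ha V E a b \<union> {\<tau> \<in> KK \<inter> St. a \<notin> \<tau>}" using t unfolding Ha_def by blast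
qed (auto simp: Ha_def)

lemma a_in_L: "{a} \<in> KK \<inter> St"
proof -
  have "{a} \<in> KK" unfolding clique_complex_def using ab by auto
  moreover have "{a} \<union> {a, b} = {a, b}" by auto
  hence "{a} \<union> {a, b} \<in> KK'" using e_in by simp
  ultimately show ?thesis using St_iff[OF cx_clique] by blast
qed

end

lemma link_eq:
  fixes V :: "'a::linorder set"
  assumes "a \<in> V" "b \<in> V" "a \<noteq> b" "{a, b} \<notin> E"
  shows "link (clique_complex V (insert {a, b} E)) {a, b} =
         Ha V E a b \<inter> Ha V E b a"
proof (rule set_eqI, rule iffI)
  fix \<tau> assume "\<tau> \<in> link (clique_complex V (insert {a, b} E)) {a, b}"
  hence t: "\<tau> \<in> closed_star (clique_complex V (insert {a, b} E)) {a, b}" "a \<notin> \<tau>" "b \<notin> \<tau>"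
    unfolding link_def by auto
  have "\<tau> \<in> clique_complex V (insert {a, b} E)"
    using t(1) K'_eq[OF assms] by blast
  hence k: "\<tau> \<in> clique_complex V E" by (rule clique_drop) (use t(2,3) in auto)
  have "{b, a} = {a, b}" by auto
  thus "\<tau> \<in> Ha V E a b \<inter> Ha V E b a" using t k unfolding Ha_def by auto
next
  fix \<tau> assume "\<tau> \<in> Ha V E a b \<inter> Ha V E b a"
  moreover have "{b, a} = {a, b}" by auto
  ultimately show "\<tau> \<in> link (clique_complex V (insert {a, b} E)) {a, b}"
    unfolding Ha_def link_def by auto
qed


lemma betti_eq:
  fixes F :: "'f::field itself" and X :: "'a::linorder set set"
  assumes "finite V" "cx V X"
  shows "betti F k X = int (fs.dim (Zs V F k X)) - int (fs.dim (Bs V F k X))"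
proof -
  have 1: "cycles F k X = Zs V F k X" by (rule cycles_eq[OF assms(1) cx_pow[OF assms(2)]])
  have 2: "boundaries F k X = Bs V F k X" by (rule boundaries_eq[OF assms(1) cx_pow[OF assms(2)]])
  show ?thesis unfolding betti_def qdim_def fdim_def 1 2 ..
qed

lemma ker_eq:
  fixes F :: "'f::field itself" and L K :: "'a::linorder set set"
  assumes "finite V" "cx V L" "cx V K"
  shows "incl_ker_rank F j L K = int (fs.dim (Zs V F j L \<inter> Bs V F j K)) - int (fs.dim (Bs V F j L))"
proof -
  have 1: "cycles F j L = Zs V F j L" by (rule cycles_eq[OF assms(1) cx_pow[OF assms(2)]])
  have 2: "boundaries F j L = Bs V F j L" by (rule boundaries_eq[OF assms(1) cx_pow[OF assms(2)]])
  have 3: "boundaries F j K = Bs V F j K" by (rule boundaries_eq[OF assms(1) cx_pow[OF assms(3)]])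
  show ?thesis unfolding incl_ker_rank_def qdim_def fdim_def 1 2 3 ..
qed

lemma im_eq:
  fixes F :: "'f::field itself" and L K :: "'a::linorder set set"
  assumes "finite V" "cx V L" "cx V K"
  shows "incl_im_rank F j L K = int (fs.dim (ssum (Zs V F j L) (Bs V F j K))) - int (fs.dim (Bs V F j K))"
proof -
  have 1: "cycles F j L = Zs V F j L" by (rule cycles_eq[OF assms(1) cx_pow[OF assms(2)]])
  have 3: "boundaries F j K = Bs V F j K" by (rule boundaries_eq[OF assms(1) cx_pow[OF assms(3)]])
  have 4: "{(\<lambda>x. z x + b x) | z b. z \<in> Zs V F j L \<and> b \<in> Bs V F j K} =
        ssum (Zs V F j L) (Bs V F j K)"
    unfolding ssum_def plus_fun_def ..
  show ?thesis unfolding incl_im_rank_def qdim_def fdim_def 1 3 4 ..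
qed

lemma vert:
  assumes "cx V X" "x \<in> V" "{x} \<in> X" "finite V"
  shows "chains F (-1) X \<subseteq> Bs V F (-1) X"
proof
  fix c :: "'a::linorder set \<Rightarrow> 'b::field" assume c: "c \<in> chains F (-1) X"
  have c0: "c \<tau> = 0" if "\<tau> \<noteq> {}" for \<tau>
  proof (rule ccontr)
    assume "c \<tau> \<noteq> 0"
    hence "finite \<tau>" "card \<tau> = 0" using c unfolding chains_def by auto
    thus False using that by simp
  qed
  define y where "y = fscale (c {}) (dl {x})"
  have y: "y \<in> chains F 0 X" unfolding chains_def y_def fscale_def dl_def using assms(3) by auto
  have "bdV V y = c"
  proof (rule ext)
    fix \<tau>
    show "bdV V y \<tau> = c \<tau>"
    proof (cases "\<tau> = {}")
      case True
      have "bdV V y \<tau> = (\<Sum>v\<in>V. if v = x then c {} else 0)"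
        unfolding bdV_def y_def fscale_def dl_def True
        by (intro sum.cong) (auto simp: sg_def)
      also have "\<dots> = c {}" using assms(2,4) by simp
      finally show ?thesis using True by simp
    next
      case False
      have "insert v \<tau> \<noteq> {x}" if "v \<in> V - \<tau>" for v
      proof
        assume "insert v \<tau> = {x}"
        hence "\<tau> \<subseteq> {x}" "v = x" by auto
        hence "\<tau> = {x}" "v = x" using False by auto
        thus False using that by auto
      qed
      hence ne: "\<And>v. v \<in> V - \<tau> \<Longrightarrow> insert v \<tau> \<noteq> {x}" by blast
      have "bdV V y \<tau> = 0" unfolding bdV_def
      proof (rule sum.neutral, rule ballI)
        fix v assume v: "v \<in> V - \<tau>"
        have "y (insert v \<tau>) = 0" unfolding y_def fscale_def dl_def if_not_P[OF ne[OF v]] by simp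
        thus "sg v \<tau> * y (insert v \<tau>) = 0" by simp
      qed
      thus ?thesis using c0[OF False] by simp
    qed
  qed
  thus "c \<in> Bs V F (-1) X" unfolding Bs_def using y by force
qed

lemma dim_zero: "fs.dim ({0} :: ('b \<Rightarrow> 'f::field) set) = 0"
proof -
  have "fs.dim ({0} :: ('b \<Rightarrow> 'f) set) = fs.dim (fs.span ({} :: ('b \<Rightarrow> 'f) set))" by simp
  also have "\<dots> = fs.dim ({} :: ('b \<Rightarrow> 'f) set)" by (rule fs.dim_span)
  also have "\<dots> = 0" using fs.dim_eq_card_independent[OF fs.independent_empty] by simp
  finally show ?thesis .
qed

lemma betti_m1_empty:
  assumes "finite V"
  shows "int (fs.dim (Zs V F (-1) {{}})) - int (fs.dim (Bs V F (-1) {{}} :: ('a::linorder set \<Rightarrow> 'f::field) set)) = 1"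
proof -
  have ch: "chains F (-1) {{}} = fs.span {dl {} :: 'a set \<Rightarrow> 'f}"
  proof (rule subset_antisym)
    show "chains F (-1) {{}} \<subseteq> fs.span {dl {}}"
    proof (rule subsetI)
      fix c assume c: "c \<in> chains F (-1) {{}}"
      have eq: "c = fscale (c {}) (dl {})"
        using c unfolding chains_def fscale_def dl_def by (auto intro!: ext)
      have "fscale (c {}) (dl {}) \<in> fs.span {dl {}}"
        by (intro fs.span_scale fs.span_base) simp
      thus "c \<in> fs.span {dl {}}" by (subst eq)
    qed
    show "fs.span {dl {}} \<subseteq> chains F (-1) {{}}"
      by (rule fs.span_minimal[OF _ ch_sub]) (auto simp: chains_def dl_def)
  qed
  have z: "Zs V F (-1) {{}} = chains F (-1) {{}}"
  proof -
    have "bdV V c = 0" if "c \<in> chains F (-1) {{}}" for c :: "'a set \<Rightarrow> 'f"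
    proof (rule ext)
      fix \<tau>
      have "c (insert v \<tau>) = 0" for v using that unfolding chains_def by auto
      thus "bdV V c \<tau> = 0 \<tau>" unfolding bdV_def by simp
    qed
    thus ?thesis unfolding Zs_def by auto
  qed
  have ind: "fs.independent {dl {} :: 'a set \<Rightarrow> 'f}"
  proof -
    have "dl {} \<noteq> (0 :: 'a set \<Rightarrow> 'f)" by (metis dl_def one_neq_zero zero_fun_def)
    thus ?thesis by simp
  qed
  have d1: "fs.dim (Zs V F (-1) {{}}) = 1"
    unfolding z ch fs.dim_span_eq_card_independent[OF ind] by simp
  have c0: "chains F 0 {{}} = {0 :: 'a set \<Rightarrow> 'f}"
    unfolding chains_def by (auto intro!: ext simp: zero_fun_def)
  have "Bs V F (-1) {{}} = {0 :: 'a set \<Rightarrow> 'f}"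
    unfolding Bs_def using c0 bdV_zero by simp
  hence d0: "fs.dim (Bs V F (-1) {{}} :: ('a set \<Rightarrow> 'f) set) = 0" using dim_zero by simp
  show ?thesis using d1 d0 by simp
qed


lemma ch_mono: "L \<subseteq> K \<Longrightarrow> chains F k L \<subseteq> chains F k K"
  unfolding chains_def by blast

lemma Bs_mono: "L \<subseteq> K \<Longrightarrow> Bs V F k L \<subseteq> Bs V F k K"
  unfolding Bs_def using ch_mono by (rule image_mono)

theorem lemma6p1:
  fixes V :: "'a::linorder set" and E :: "'a set set" and u v :: 'a
    and F :: "'f::field itself"
  assumes "finite V"
    and "\<forall>e\<in>E. e \<subseteq> V \<and> card e = 2"
    and "u \<in> V" and "v \<in> V" and "u \<noteq> v" and "{u, v} \<notin> E"
  shows "(\<forall>k::int. k > 0 \<longrightarrow>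
            betti F k (clique_complex V (insert {u, v} E)) =
              betti F k (clique_complex V E)
              + Fplus F (clique_complex V E) (clique_complex V (insert {u, v} E)) {u, v} k
              - Fminus F (clique_complex V E) (clique_complex V (insert {u, v} E)) {u, v} (k + 1))
       \<and> betti F 0 (clique_complex V (insert {u, v} E)) =
              betti F 0 (clique_complex V E)
              - Fminus F (clique_complex V E) (clique_complex V (insert {u, v} E)) {u, v} 1
       \<and> (\<forall>k::int. k > 1 \<longrightarrow>
            Fplus F (clique_complex V E) (clique_complex V (insert {u, v} E)) {u, v} k
            + Fminus F (clique_complex V E) (clique_complex V (insert {u, v} E)) {u, v} k =
              betti F (k - 2) (link (clique_complex V (insert {u, v} E)) {u, v}))
       \<and> Fplus F (clique_complex V E) (clique_complex V (insert {u, v} E)) {u, v} 1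
         + Fminus F (clique_complex V E) (clique_complex V (insert {u, v} E)) {u, v} 1 =
           (if link (clique_complex V (insert {u, v} E)) {u, v} = {{}} then 1 else 0)"
proof -
  let ?K = "clique_complex V E"
  let ?K' = "clique_complex V (insert {u, v} E)"
  let ?St = "closed_star ?K' {u, v}"
  let ?L = "?K \<inter> ?St"
  let ?lk = "link ?K' {u, v}"
  let ?A = "Ha V E u v"
  let ?B = "Ha V E v u"
  note V = assms(1)
  have ab: "u \<in> V" "v \<in> V" "u \<noteq> v" "{u, v} \<notin> E" using assms(3-6) by auto
  have vu: "{v, u} = {u, v}" by auto
  have ab': "v \<in> V" "u \<in> V" "v \<noteq> u" "{v, u} \<notin> E" using ab unfolding vu by auto
  have cK: "cx V ?K" by (rule cx_clique)
  have cK': "cx V ?K'" by (rule cx_clique)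
  have cSt: "cx V ?St" by (rule cx_St[OF cK'])
  have cL: "cx V ?L" by (rule cx_Int[OF cK cSt])
  have cX: "cx V (?K \<union> ?St)" by (rule cx_Un[OF cK cSt])
  have K'eq: "?K' = ?K \<union> ?St" by (rule K'_eq[OF ab])
  have Stcone: "\<And>\<sigma>. \<sigma> \<in> ?St \<Longrightarrow> insert u \<sigma> \<in> ?St" by (rule St_cone[OF ab])
  have cA: "cx V ?A" by (rule cx_Ha[OF ab])
  have cB: "cx V ?B" by (rule cx_Ha[OF ab'])
  have Acone: "\<And>\<sigma>. \<sigma> \<in> ?A \<Longrightarrow> insert u \<sigma> \<in> ?A" by (rule Ha_cone[OF ab])
  have Bcone: "\<And>\<sigma>. \<sigma> \<in> ?B \<Longrightarrow> insert v \<sigma> \<in> ?B" by (rule Ha_cone[OF ab'])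
  have Beq: "?B = {\<tau> \<in> ?K \<inter> ?St. u \<notin> \<tau>}" unfolding Ha_def vu ..
  have Leq: "?L = ?A \<union> ?B" unfolding Beq by (rule L_split[OF ab])
  have lkeq: "?lk = ?A \<inter> ?B" by (rule link_eq[OF ab])
  have clk: "cx V ?lk" unfolding lkeq by (rule cx_Int[OF cA cB])
  have Fp: "Fplus F ?K ?K' {u, v} k = int (fs.dim (Zs V F (k - 1) ?L \<inter> Bs V F (k - 1) ?K))
              - int (fs.dim (Bs V F (k - 1) ?L))" for k
    unfolding Fplus_def by (rule ker_eq[OF V cL cK])
  have Fm: "Fminus F ?K ?K' {u, v} k = int (fs.dim (ssum (Zs V F (k - 1) ?L) (Bs V F (k - 1) ?K)))
              - int (fs.dim (Bs V F (k - 1) ?K))" for k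
    unfolding Fminus_def by (rule im_eq[OF V cL cK])
  have C1: "betti F k ?K' = betti F k ?K + Fplus F ?K ?K' {u, v} k - Fminus F ?K ?K' {u, v} (k + 1)" for k
  proof -
    have "betti F k ?K' = betti F k (?K \<union> ?St)" by (rule arg_cong[where f="betti F k", OF K'eq])
    also have "\<dots> = int (fs.dim (Zs V F k (?K \<union> ?St))) - int (fs.dim (Bs V F k (?K \<union> ?St)))"
      by (rule betti_eq[OF V cX])
    also have "\<dots> = int (fs.dim (Zs V F k ?K)) - int (fs.dim (Bs V F k ?K))
      + (int (fs.dim (Zs V F (k - 1) ?L \<inter> Bs V F (k - 1) ?K)) - int (fs.dim (Bs V F (k - 1) ?L)))
      - (int (fs.dim (ssum (Zs V F k ?L) (Bs V F k ?K))) - int (fs.dim (Bs V F k ?K)))"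
      by (rule MV1[OF V cK cSt ab(1) Stcone])
    also have "\<dots> = betti F k ?K + Fplus F ?K ?K' {u, v} k - Fminus F ?K ?K' {u, v} (k + 1)"
      unfolding Fp Fm betti_eq[OF V cK] by simp
    finally show ?thesis .
  qed
  have F0: "Fplus F ?K ?K' {u, v} 0 = 0"
  proof -
    have "Zs V F (-1) ?L \<inter> Bs V F (-1) ?K = Bs V F (-1) ?L"
    proof (rule subset_antisym)
      have "Zs V F (-1) ?L \<subseteq> Bs V F (-1) ?L"
        using Zs_ch vert[OF cL ab(1) a_in_L[OF ab] V] by (rule subset_trans)
      thus "Zs V F (-1) ?L \<inter> Bs V F (-1) ?K \<subseteq> Bs V F (-1) ?L" by blast
      have "Bs V F (-1) ?L \<subseteq> Bs V F (-1) ?K" by (rule Bs_mono) blast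
      moreover have "Bs V F (-1) ?L \<subseteq> Zs V F (-1) ?L" by (rule Bs_Zs[OF V cL])
      ultimately show "Bs V F (-1) ?L \<subseteq> Zs V F (-1) ?L \<inter> Bs V F (-1) ?K" by blast
    qed
    thus ?thesis unfolding Fp by simp
  qed
  have C3: "Fplus F ?K ?K' {u, v} k + Fminus F ?K ?K' {u, v} k =
      int (fs.dim (Zs V F (k - 2) ?lk)) - int (fs.dim (Bs V F (k - 2) ?lk))" for k
  proof -
    have "Fplus F ?K ?K' {u, v} k + Fminus F ?K ?K' {u, v} k =
        int (fs.dim (Zs V F (k - 1) ?L)) - int (fs.dim (Bs V F (k - 1) ?L))"
      unfolding Fp Fm by (rule FF[OF V cL cK])
    also have "\<dots> = int (fs.dim (Zs V F (k - 1 - 1) ?lk)) - int (fs.dim (Bs V F (k - 1 - 1) ?lk))"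
      unfolding Leq lkeq by (rule MV2[OF V cA cB ab(1) Acone ab(2) Bcone])
    also have "k - 1 - 1 = k - 2" by simp
    finally show ?thesis .
  qed
  show ?thesis
  proof (intro conjI allI impI)
    fix k :: int assume "k > 0"
    show "betti F k ?K' = betti F k ?K + Fplus F ?K ?K' {u, v} k - Fminus F ?K ?K' {u, v} (k + 1)"
      by (rule C1)
  next
    show "betti F 0 ?K' = betti F 0 ?K - Fminus F ?K ?K' {u, v} 1"
      using C1[of 0] F0 by simp
  next
    fix k :: int assume "k > 1"
    show "Fplus F ?K ?K' {u, v} k + Fminus F ?K ?K' {u, v} k = betti F (k - 2) ?lk"
      unfolding C3 betti_eq[OF V clk] ..
  next
    have e: "Fplus F ?K ?K' {u, v} 1 + Fminus F ?K ?K' {u, v} 1 =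
      int (fs.dim (Zs V F (-1) ?lk)) - int (fs.dim (Bs V F (-1) ?lk))"
      using C3[of 1] by simp
    show "Fplus F ?K ?K' {u, v} 1 + Fminus F ?K ?K' {u, v} 1 = (if ?lk = {{}} then 1 else 0)"
    proof (cases "?lk = {{}}")
      case True
      show ?thesis unfolding e True using betti_m1_empty[OF V, of F] by simp
    next
      case False
      have "{} \<in> ?lk"
      proof -
        have "{u, v} \<in> ?K'" by (rule e_in[OF ab])
        hence "{} \<in> ?St" unfolding closed_star_def by blast
        thus ?thesis unfolding link_def by blast
      qed
      then obtain \<sigma> where s: "\<sigma> \<in> ?lk" "\<sigma> \<noteq> {}" using False by blast
      then obtain x where x: "x \<in> \<sigma>" by blast
      have xl: "{x} \<in> ?lk" using cx_down[OF clk s(1)] x by blast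
      have xV: "x \<in> V" using cx_pow[OF clk] s(1) x by blast
      have "Zs V F (-1) ?lk \<subseteq> Bs V F (-1) ?lk"
        using Zs_ch vert[OF clk xV xl V] by (rule subset_trans)
      moreover have "Bs V F (-1) ?lk \<subseteq> Zs V F (-1) ?lk" by (rule Bs_Zs[OF V clk])
      ultimately have "Zs V F (-1) ?lk = Bs V F (-1) ?lk" by (rule subset_antisym)
      thus ?thesis unfolding e using False by simp
    qed
  qed
qed


end
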